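(* For any integer $k\ge1$, no online algorithm achieves a competitive ratio better than $2\ln2$ for the online ATWC dispersion problem without boundary condition for arbitrary $k$-dimensional polytopes; i.e., there is no online algorithm that is $\sigma$-competitive with $\sigma<2\ln2$ for every $k$-dimensional polytope $P$.
   Context: Distances are Euclidean. For a polytope $P$ and $n\ge2$, $SP(n;P)=\max_{X_1,\dots,X_n\in P}\min_{i\ne j}dis(X_i,X_j)$. An instance is $S=((s_1,d_1),\dots,(s_n,d_n))$ with $s_i<d_i$, $0=s_1\le\dots\le s_n$; point $i$ is present at time $t$ iff $s_i\le t\le d_i$; $T=\max_id_i$. For $X\in P^n$, $d^{SP}_{min}(t;X)=\min dis(X_i,X_j)$ over present points $i\ne j$ at time $t$, and $OPT^{SP}_A(S;P)=\max_X\min_{t\le T}d^{SP}_{min}(t;X)$. In the online problem, upon arrival of each point the algorithm irrevocably chooses its location in $P$ without knowing future events or the number of points; an adaptive adversary chooses the events. An online algorithm is $\sigma$-competitive for $P$ if $OPT^{SP}_A(S;P)\le\sigma\min_{t\le T}d^{SP}_{min}(t;X)$ for every instance $S$ and its output $X$. *)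

theory Defs
  imports "HOL-Analysis.Analysis"
begin

text \<open>An instance is a list of (arrival, departure) pairs; point i is
  at index i of the list (0-based).\<close>

type_synonym dinst = "(real \<times> real) list"

definition valid_instance :: "dinst \<Rightarrow> bool" where
  "valid_instance S \<longleftrightarrow> S \<noteq> [] \<and> fst (S ! 0) = 0
     \<and> (\<forall>i < length S. fst (S ! i) < snd (S ! i))
     \<and> (\<forall>i j. i \<le> j \<longrightarrow> j < length S \<longrightarrow> fst (S ! i) \<le> fst (S ! j))"

definition present :: "dinst \<Rightarrow> nat \<Rightarrow> real \<Rightarrow> bool" where
  "present S i t \<longleftrightarrow> i < length S \<and> fst (S ! i) \<le> t \<and> t \<le> snd (S ! i)"

definition T_end :: "dinst \<Rightarrow> real" where
  "T_end S = Max (snd ` set S)"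

text \<open>Minimum distance among present points at time t (infinity if fewer than two present).\<close>
definition dmin :: "dinst \<Rightarrow> (nat \<Rightarrow> 'a::euclidean_space) \<Rightarrow> real \<Rightarrow> ereal" where
  "dmin S X t = (INF p \<in> {(i, j). i \<noteq> j \<and> present S i t \<and> present S j t}.
                    ereal (dist (X (fst p)) (X (snd p))))"

definition objective :: "dinst \<Rightarrow> (nat \<Rightarrow> 'a::euclidean_space) \<Rightarrow> ereal" where
  "objective S X = (INF t \<in> {..T_end S}. dmin S X t)"

definition OPT :: "dinst \<Rightarrow> 'a::euclidean_space set \<Rightarrow> ereal" where
  "OPT S P = (SUP X \<in> {X. \<forall>i < length S. X i \<in> P}. objective S X)"

text \<open>It is online for P if every location lies in P and
  the location of point i depends only on the information available at its arrival
  time: the arrival times of points 0..i and the departure times of earlier points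
  that have already departed (strictly before the arrival of i).\<close>

definition same_info :: "dinst \<Rightarrow> dinst \<Rightarrow> nat \<Rightarrow> bool" where
  "same_info S S' i \<longleftrightarrow> i < length S \<and> i < length S'
     \<and> (\<forall>j \<le> i. fst (S ! j) = fst (S' ! j))
     \<and> (\<forall>j < i. (snd (S ! j) < fst (S ! i) \<or> snd (S' ! j) < fst (S' ! i))
                 \<longrightarrow> snd (S ! j) = snd (S' ! j))"

definition online_alg :: "'a::euclidean_space set \<Rightarrow> (dinst \<Rightarrow> nat \<Rightarrow> 'a) \<Rightarrow> bool" where
  "online_alg P A \<longleftrightarrow>
     (\<forall>S. valid_instance S \<longrightarrow> (\<forall>i < length S. A S i \<in> P))
   \<and> (\<forall>S S' i. valid_instance S \<longrightarrow> valid_instance S' \<longrightarrow> same_info S S' i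
          \<longrightarrow> A S i = A S' i)"

definition competitive :: "real \<Rightarrow> 'a::euclidean_space set \<Rightarrow> (dinst \<Rightarrow> nat \<Rightarrow> 'a) \<Rightarrow> bool" where
  "competitive \<sigma> P A \<longleftrightarrow>
     (\<forall>S. valid_instance S \<longrightarrow> OPT S P \<le> ereal \<sigma> * objective S (A S))"

end

theory Submission
  imports Defs
begin

lemma harm_ln2:
  assumes "n \<ge> (1::nat)"
  shows "ln 2 \<le> (\<Sum>p\<in>{n..<2*n}. 1 / real p)"
proof -
  have "(\<Sum>p\<in>{n..<2*n}. ln (real (Suc p)) - ln (real p)) = ln (real (2*n)) - ln (real n)"
    by (rule sum_Suc_diff') simp
  also have "\<dots> = ln 2" using assms by (simp add: ln_mult)
  finally have e: "(\<Sum>p\<in>{n..<2*n}. ln (real (Suc p)) - ln (real p)) = ln 2" .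
  have "(\<Sum>p\<in>{n..<2*n}. ln (real (Suc p)) - ln (real p)) \<le> (\<Sum>p\<in>{n..<2*n}. 1 / real p)"
  proof (rule sum_mono)
    fix p assume "p \<in> {n..<2*n}"
    hence p: "p \<ge> 1" using assms by auto
    have q: "1 + 1 / real p = real (Suc p) / real p" using p by (simp add: field_simps)
    have "ln (real (Suc p)) - ln (real p) = ln (1 + 1 / real p)"
      unfolding q using p by (subst ln_div) auto
    also have "\<dots> \<le> 1 / real p" by (rule ln_add_one_self_le_self) simp
    finally show "ln (real (Suc p)) - ln (real p) \<le> 1 / real p" .
  qed
  with e show ?thesis by simp
qed

lemma sum_hprime:
  assumes "n \<ge> (1::nat)"
  shows "(\<Sum>p<2*n. (if n \<le> p then 1 / real p - 1 / real n else 0))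
          = (\<Sum>p\<in>{n..<2*n}. 1 / real p) - 1"
proof -
  have u: "{..<2*n} = {..<n} \<union> {n..<2*n}" by auto
  have "(\<Sum>p<2*n. (if n \<le> p then 1 / real p - 1 / real n else 0))
      = (\<Sum>p<n. (if n \<le> p then 1 / real p - 1 / real n else 0))
        + (\<Sum>p\<in>{n..<2*n}. (if n \<le> p then 1 / real p - 1 / real n else 0))"
    unfolding u by (rule sum.union_disjoint) auto
  also have "(\<Sum>p<n. (if n \<le> p then 1 / real p - 1 / real n else 0)) = 0" by simp
  also have "(\<Sum>p\<in>{n..<2*n}. (if n \<le> p then 1 / real p - 1 / real n else 0))
       = (\<Sum>p\<in>{n..<2*n}. 1 / real p - 1 / real n)" by (rule sum.cong) auto
  also have "\<dots> = (\<Sum>p\<in>{n..<2*n}. 1 / real p) - 1"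
    using assms by (simp add: sum_subtractf)
  finally show ?thesis by simp
qed

lemma comb1D:
  fixes y :: "nat \<Rightarrow> real" and \<sigma> \<delta> :: real and n :: nat
  assumes n1: "n \<ge> 1" and sp: "\<sigma> > 0"
    and y01: "\<And>i. i < 2*n \<Longrightarrow> 0 \<le> y i \<and> y i \<le> 1"
    and gap: "\<And>a b. a < 2*n \<Longrightarrow> b < 2*n \<Longrightarrow> a \<noteq> b \<Longrightarrow>
                 1 / (\<sigma> * real (max a b)) - \<delta> \<le> \<bar>y a - y b\<bar>"
  shows "2 * ln 2 - 1 / real n \<le> \<sigma> * (1 + real (2*n - 1) * \<delta>)"
proof -
  define N where "N = 2*n"
  define L where "L = sort_key y [0..<N]"
  have lenL: "length L = N" by (simp add: L_def)
  have setL: "set L = {..<N}" by (auto simp: L_def)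
  have distL: "distinct L" by (simp add: L_def)
  have sortL: "sorted (map y L)" by (simp add: L_def)
  have Lin: "\<And>j. j < N \<Longrightarrow> L ! j < N" using setL lenL nth_mem by blast
  have mono: "\<And>j. Suc j < N \<Longrightarrow> y (L ! j) \<le> y (L ! Suc j)"
    using sortL lenL by (simp add: sorted_iff_nth_mono)
  define M where "M j = max (L ! j) (L ! Suc j)" for j
  have Lne: "\<And>j. Suc j < N \<Longrightarrow> L ! j \<noteq> L ! Suc j"
    using distL lenL by (simp add: nth_eq_iff_index_eq)
  have M1: "\<And>j. Suc j < N \<Longrightarrow> M j \<ge> 1" using Lne by (force simp: M_def)
  have MN: "\<And>j. Suc j < N \<Longrightarrow> M j < N" using Lin by (simp add: M_def)
  have tele: "(\<Sum>j<N-1. y (L ! Suc j) - y (L ! j)) = y (L ! (N-1)) - y (L ! 0)"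
    by (rule sum_lessThan_telescope)
  have "y (L ! (N-1)) \<le> 1" "0 \<le> y (L ! 0)"
    using y01 Lin n1 by (auto simp: N_def)
  hence sum1: "(\<Sum>j<N-1. y (L ! Suc j) - y (L ! j)) \<le> 1" using tele by simp
  have termge: "1 / (\<sigma> * real (M j)) - \<delta> \<le> y (L ! Suc j) - y (L ! j)" if "j < N-1" for j
  proof -
    have j: "Suc j < N" using that by simp
    have "1 / (\<sigma> * real (max (L ! j) (L ! Suc j))) - \<delta> \<le> \<bar>y (L ! j) - y (L ! Suc j)\<bar>"
      using gap[of "L ! j" "L ! Suc j"] Lin[of j] Lin[of "Suc j"] Lne[OF j] j by (simp add: N_def)
    thus ?thesis using mono[OF j] by (simp add: M_def)
  qed
  define h where "h p = (if n \<le> p then 1 / real p - 1 / real n else 0)" for p :: nat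
  have hle: "\<And>p. h p \<le> 0" using n1 by (auto simp: h_def field_simps)
  have Mge: "1 / real n + h (M j) \<le> 1 / real (M j)" if "j < N-1" for j
  proof (cases "n \<le> M j")
    case True thus ?thesis by (simp add: h_def)
  next
    case False
    have "M j \<ge> 1" using M1[of j] that by simp
    hence "1 / real n \<le> 1 / real (M j)" using False
      by (intro divide_left_mono) auto
    thus ?thesis using False by (simp add: h_def)
  qed
  define g where "g j = (M j, L ! j = M j)" for j
  have ginj: "inj_on g {..<N-1}"
  proof (rule inj_onI)
    fix j j' assume j: "j \<in> {..<N-1}" and j': "j' \<in> {..<N-1}" and e: "g j = g j'"
    hence eM: "M j = M j'" and eb: "(L ! j = M j) = (L ! j' = M j')" by (auto simp: g_def)
    show "j = j'"
    proof (cases "L ! j = M j")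
      case True
      hence "L ! j = L ! j'" using eM eb by simp
      thus ?thesis using distL lenL j j' by (simp add: nth_eq_iff_index_eq)
    next
      case False
      hence "L ! Suc j = M j" "L ! Suc j' = M j'" using eM eb by (auto simp: M_def max_def split: if_splits)
      hence "L ! Suc j = L ! Suc j'" using eM by simp
      thus ?thesis using distL lenL j j' by (simp add: nth_eq_iff_index_eq)
    qed
  qed
  have gsub: "g ` {..<N-1} \<subseteq> {..<N} \<times> UNIV" using MN by (auto simp: g_def)
  have "(\<Sum>j<N-1. h (M j)) = (\<Sum>s\<in>g ` {..<N-1}. h (fst s))"
    using sum.reindex[OF ginj, of "\<lambda>s. h (fst s)"] by (simp add: g_def)
  also have "\<dots> \<ge> (\<Sum>s\<in>{..<N} \<times> (UNIV::bool set). h (fst s))"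
  proof -
    have "(\<Sum>s\<in>g ` {..<N-1}. - h (fst s)) \<le> (\<Sum>s\<in>{..<N} \<times> (UNIV::bool set). - h (fst s))"
      by (rule sum_mono2) (use gsub hle in auto)
    thus ?thesis by (simp add: sum_negf)
  qed
  finally have hs: "(\<Sum>s\<in>{..<N} \<times> (UNIV::bool set). h (fst s)) \<le> (\<Sum>j<N-1. h (M j))" .
  have "(\<Sum>s\<in>{..<N} \<times> (UNIV::bool set). h (fst s)) = (\<Sum>p<N. \<Sum>b\<in>(UNIV::bool set). h p)"
    by (subst sum.cartesian_product) (simp add: case_prod_beta)
  also have "\<dots> = 2 * (\<Sum>p<N. h p)" by (simp add: sum_distrib_left)
  also have "(\<Sum>p<N. h p) = (\<Sum>p\<in>{n..<2*n}. 1 / real p) - 1"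
    unfolding h_def N_def by (rule sum_hprime[OF n1])
  finally have hs2: "2 * ((\<Sum>p\<in>{n..<2*n}. 1 / real p) - 1) \<le> (\<Sum>j<N-1. h (M j))"
    using hs by simp
  have "(\<Sum>j<N-1. 1 / real n + h (M j)) \<le> (\<Sum>j<N-1. 1 / real (M j))"
    by (rule sum_mono) (use Mge in auto)
  hence "real (N-1) / real n + (\<Sum>j<N-1. h (M j)) \<le> (\<Sum>j<N-1. 1 / real (M j))"
    by (simp add: sum.distrib)
  moreover have "real (N-1) / real n = 2 - 1 / real n" using n1
    by (simp add: N_def of_nat_diff field_simps)
  ultimately have S: "2 * (\<Sum>p\<in>{n..<2*n}. 1 / real p) - 1 / real n \<le> (\<Sum>j<N-1. 1 / real (M j))"
    using hs2 by simp
  have "(\<Sum>j<N-1. 1 / (\<sigma> * real (M j)) - \<delta>) \<le> 1"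
  proof -
    have "(\<Sum>j<N-1. 1 / (\<sigma> * real (M j)) - \<delta>) \<le> (\<Sum>j<N-1. y (L ! Suc j) - y (L ! j))"
      by (rule sum_mono) (use termge in auto)
    thus ?thesis using sum1 by linarith
  qed
  hence "(\<Sum>j<N-1. 1 / real (M j)) / \<sigma> - real (N-1) * \<delta> \<le> 1"
    by (simp add: sum_subtractf sum_divide_distrib mult.commute)
  hence "(\<Sum>j<N-1. 1 / real (M j)) \<le> \<sigma> * (1 + real (N-1) * \<delta>)"
    using sp by (simp add: field_simps)
  with S harm_ln2[OF n1] show ?thesis by (simp add: N_def)
qed

lemma valid_rep: "m \<ge> 1 \<Longrightarrow> valid_instance (replicate m (0::real, 1::real))"
  by (auto simp: valid_instance_def)

lemma present_rep: "present (replicate m (0, 1)) i t \<longleftrightarrow> i < m \<and> 0 \<le> t \<and> t \<le> 1"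
  by (auto simp: present_def)

lemma T_end_rep: "m \<ge> 1 \<Longrightarrow> T_end (replicate m (0::real, 1::real)) = 1"
proof -
  assume "m \<ge> 1"
  hence "set (replicate m (0::real, 1::real)) = {(0,1)}" by (cases m) auto
  thus ?thesis by (simp add: T_end_def)
qed

lemma objective_rep_le:
  fixes X :: "nat \<Rightarrow> 'a::euclidean_space"
  assumes "a < m" "b < m" "a \<noteq> b"
  shows "objective (replicate m (0, 1)) X \<le> ereal (dist (X a) (X b))"
proof -
  have m: "m \<ge> 1" using assms by simp
  have "objective (replicate m (0, 1)) X \<le> dmin (replicate m (0, 1)) X 0"
    unfolding objective_def by (rule INF_lower) (simp add: T_end_rep[OF m])
  also have "\<dots> \<le> ereal (dist (X (fst (a,b))) (X (snd (a,b))))"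
    unfolding dmin_def by (rule INF_lower) (use assms in \<open>auto simp: present_rep\<close>)
  finally show ?thesis by simp
qed

lemma objective_rep_ge:
  fixes X :: "nat \<Rightarrow> 'a::euclidean_space"
  assumes "\<And>i j. i < m \<Longrightarrow> j < m \<Longrightarrow> i \<noteq> j \<Longrightarrow> d \<le> dist (X i) (X j)"
  shows "ereal d \<le> objective (replicate m (0, 1)) X"
  unfolding objective_def dmin_def
  by (intro INF_greatest) (use assms in \<open>auto simp: present_rep\<close>)

lemma same_info_rep: "i < m \<Longrightarrow> m \<le> N \<Longrightarrow> same_info (replicate m (0, 1)) (replicate N (0, 1)) i"
  by (auto simp: same_info_def)

lemma bound_pair:
  fixes P :: "'a::euclidean_space set" and A and Z :: "nat \<Rightarrow> 'a"
  assumes onl: "online_alg P A" and comp: "competitive \<sigma> P A"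
    and ZP: "\<And>i. i < m \<Longrightarrow> Z i \<in> P"
    and Zd: "\<And>i j. i < m \<Longrightarrow> j < m \<Longrightarrow> i \<noteq> j \<Longrightarrow> d \<le> dist (Z i) (Z j)"
    and ab: "a < m" "b < m" "a \<noteq> b" and mN: "m \<le> N" and dp: "d > 0"
  shows "\<sigma> > 0 \<and> d \<le> \<sigma> * dist (A (replicate N (0, 1)) a) (A (replicate N (0, 1)) b)"
proof -
  define S where "S = replicate m (0::real, 1::real)"
  have m: "m \<ge> 1" using ab by simp
  have vS: "valid_instance S" using valid_rep[OF m] by (simp add: S_def)
  have vN: "valid_instance (replicate N (0::real, 1::real))" using valid_rep[of N] m mN by simp
  have "ereal d \<le> objective S Z" unfolding S_def by (rule objective_rep_ge) (use Zd in auto)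
  also have "objective S Z \<le> OPT S P" unfolding OPT_def
    by (rule SUP_upper) (use ZP in \<open>auto simp: S_def\<close>)
  also have "OPT S P \<le> ereal \<sigma> * objective S (A S)" using comp vS by (simp add: competitive_def)
  finally have d1: "ereal d \<le> ereal \<sigma> * objective S (A S)" .
  have Aa: "A S a = A (replicate N (0, 1)) a" "A S b = A (replicate N (0, 1)) b"
    using onl vS vN same_info_rep[of a m N] same_info_rep[of b m N] ab mN
    unfolding online_alg_def S_def by blast+
  define D where "D = dist (A (replicate N (0, 1)) a) (A (replicate N (0, 1)) b)"
  have up: "objective S (A S) \<le> ereal D"
    using objective_rep_le[OF ab, of "A S"] Aa by (simp add: S_def D_def)
  have lo: "ereal 0 \<le> objective S (A S)" unfolding S_def by (rule objective_rep_ge) auto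
  obtain r where r: "objective S (A S) = ereal r" using up lo by (cases "objective S (A S)") auto
  have r0: "0 \<le> r" "r \<le> D" using up lo r by auto
  have dr: "d \<le> \<sigma> * r" using d1 r by simp
  have sp: "\<sigma> > 0"
  proof (rule ccontr)
    assume "\<not> \<sigma> > 0"
    hence "\<sigma> * r \<le> 0" using r0 by (simp add: mult_nonpos_nonneg)
    thus False using dr dp by simp
  qed
  have "\<sigma> * r \<le> \<sigma> * D" using sp r0 by simp
  hence "d \<le> \<sigma> * D" using dr by linarith
  thus ?thesis using sp by (simp add: D_def)
qed

theorem theorem9:
  fixes \<sigma> :: real
  assumes "\<sigma> < 2 * ln 2"
  shows "\<not> (\<exists>A :: (real ^ 'k) set \<Rightarrow> dinst \<Rightarrow> nat \<Rightarrow> real ^ 'k.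
             \<forall>P. polytope P \<and> aff_dim P = int CARD('k) \<longrightarrow>
                 online_alg P (A P) \<and> competitive \<sigma> P (A P))"
proof
  assume "\<exists>A :: (real ^ 'k) set \<Rightarrow> dinst \<Rightarrow> nat \<Rightarrow> real ^ 'k.
             \<forall>P. polytope P \<and> aff_dim P = int CARD('k) \<longrightarrow>
                 online_alg P (A P) \<and> competitive \<sigma> P (A P)"
  then obtain A :: "(real ^ 'k) set \<Rightarrow> dinst \<Rightarrow> nat \<Rightarrow> real ^ 'k" where
    HA: "\<And>P. polytope P \<Longrightarrow> aff_dim P = int CARD('k) \<Longrightarrow>
                 online_alg P (A P) \<and> competitive \<sigma> P (A P)" by blast
  define i0 :: 'k where "i0 = undefined"
  define c where "c = (2 * ln 2 - \<sigma>) / 4"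
  have c0: "c > 0" using assms by (simp add: c_def)
  obtain n0 :: nat where n0: "inverse (real (Suc n0)) < c" using reals_Archimedean[OF c0] by blast
  define n where "n = Suc n0"
  have n1: "n \<ge> 1" by (simp add: n_def)
  have nc: "1 / real n < c" using n0 by (simp add: n_def inverse_eq_divide)
  define K where "K = real CARD('k)"
  have K0: "K > 0" by (simp add: K_def)
  define \<epsilon> where "\<epsilon> = c / (2 * real n * K * (\<bar>\<sigma>\<bar> + 1))"
  have e0: "\<epsilon> > 0" using c0 K0 n1 by (simp add: \<epsilon>_def)
  define bb :: "real ^ 'k" where "bb = (\<chi> i. if i = i0 then 1 else \<epsilon>)"
  define P where "P = cbox 0 bb"
  have polyP: "polytope P" by (simp add: P_def polytope_interval)
  have "bb /\<^sub>R 2 \<in> box 0 bb" using e0 by (simp add: mem_box_cart bb_def)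
  hence "interior P \<noteq> {}" by (auto simp: P_def interior_cbox)
  hence affP: "aff_dim P = int CARD('k)" by (simp add: aff_dim_nonempty_interior)
  have onl: "online_alg P (A P)" and comp: "competitive \<sigma> P (A P)" using HA[OF polyP affP] by auto
  define N where "N = 2 * n"
  define x where "x i = A P (replicate N (0, 1)) i" for i
  define y where "y i = x i $ i0" for i
  have vN: "valid_instance (replicate N (0::real, 1::real))" using valid_rep[of N] n1 by (simp add: N_def)
  have xP: "x i \<in> P" if "i < N" for i
    using onl vN that by (simp add: online_alg_def x_def)
  have y01: "0 \<le> y i \<and> y i \<le> 1" if "i < 2 * n" for i
  proof -
    have "\<forall>j. 0 \<le> x i $ j \<and> x i $ j \<le> bb $ j"
      using xP[of i] that by (simp add: N_def P_def mem_box_cart)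
    hence "0 \<le> x i $ i0 \<and> x i $ i0 \<le> bb $ i0" by blast
    thus ?thesis by (simp add: y_def bb_def)
  qed
  have distle: "dist (x a) (x b) \<le> \<bar>y a - y b\<bar> + K * \<epsilon>" if "a < N" "b < N" for a b
  proof -
    have "dist (x a) (x b) \<le> (\<Sum>i\<in>UNIV. \<bar>(x a - x b) $ i\<bar>)"
      unfolding dist_norm by (rule norm_le_l1_cart)
    also have "\<dots> \<le> (\<Sum>i\<in>UNIV. (if i = i0 then \<bar>y a - y b\<bar> else 0) + \<epsilon>)"
    proof (rule sum_mono)
      fix i
      have "0 \<le> x a $ i \<and> x a $ i \<le> bb $ i" "0 \<le> x b $ i \<and> x b $ i \<le> bb $ i"
        using xP[OF that(1)] xP[OF that(2)] by (auto simp: P_def mem_box_cart)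
      thus "\<bar>(x a - x b) $ i\<bar> \<le> (if i = i0 then \<bar>y a - y b\<bar> else 0) + \<epsilon>"
        using e0 by (auto simp: y_def bb_def)
    qed
    also have "\<dots> = \<bar>y a - y b\<bar> + K * \<epsilon>" by (simp add: sum.distrib K_def)
    finally show ?thesis .
  qed
  have gap: "1 / (\<sigma> * real (max a b)) - K * \<epsilon> \<le> \<bar>y a - y b\<bar> \<and> \<sigma> > 0"
    if ab: "a < 2 * n" "b < 2 * n" "a \<noteq> b" for a b
  proof -
    define m where "m = Suc (max a b)"
    define Z :: "nat \<Rightarrow> real ^ 'k" where
      "Z i = (\<chi> j. if j = i0 then real i / real (max a b) else 0)" for i
    have M1: "max a b \<ge> 1" using ab by auto
    have ZP: "Z i \<in> P" if "i < m" for i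
      using that M1 e0 by (auto simp: Z_def P_def mem_box_cart bb_def m_def)
    have Zd: "1 / real (max a b) \<le> dist (Z i) (Z j)" if "i < m" "j < m" "i \<noteq> j" for i j
    proof -
      have "\<bar>(Z i - Z j) $ i0\<bar> \<le> norm (Z i - Z j)" by (rule component_le_norm_cart)
      moreover have "(Z i - Z j) $ i0 = (real i - real j) / real (max a b)"
        by (simp add: Z_def diff_divide_distrib)
      moreover have "1 \<le> \<bar>real i - real j\<bar>" using that(3) by linarith
      moreover have "1 / real (max a b) \<le> \<bar>real i - real j\<bar> / real (max a b)"
        using \<open>1 \<le> \<bar>real i - real j\<bar>\<close> M1 by (intro divide_right_mono) auto
      ultimately show ?thesis using M1 by (simp add: dist_norm abs_divide)
    qed
    have bp: "\<sigma> > 0 \<and> 1 / real (max a b) \<le> \<sigma> * dist (x a) (x b)"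
      unfolding x_def
    proof (rule bound_pair[where m=m and N=N and Z=Z, OF onl comp])
      show "\<And>i. i < m \<Longrightarrow> Z i \<in> P" by (rule ZP)
      show "\<And>i j. i < m \<Longrightarrow> j < m \<Longrightarrow> i \<noteq> j \<Longrightarrow> 1 / real (max a b) \<le> dist (Z i) (Z j)"
        by (rule Zd)
    qed (use ab M1 in \<open>auto simp: m_def N_def\<close>)
    hence sp: "\<sigma> > 0" by simp
    have "1 / (\<sigma> * real (max a b)) \<le> dist (x a) (x b)"
      using bp sp M1 by (simp add: field_simps)
    thus ?thesis using distle[of a b] ab sp by (simp add: N_def)
  qed
  have sp: "\<sigma> > 0" using gap[of 0 1] n1 by simp
  have main: "2 * ln 2 - 1 / real n \<le> \<sigma> * (1 + real (2*n - 1) * (K * \<epsilon>))"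
    by (rule comb1D[OF n1 sp y01]) (use gap in auto)
  have "\<sigma> * (real (2*n - 1) * (K * \<epsilon>)) \<le> \<sigma> * (real (2*n) * (K * \<epsilon>))"
    using sp K0 e0 by (intro mult_left_mono mult_right_mono) auto
  also have "\<sigma> * (real (2*n) * (K * \<epsilon>)) = c * (\<sigma> / (\<bar>\<sigma>\<bar> + 1))"
  proof -
    have nz: "2 * real n * K * (\<bar>\<sigma>\<bar> + 1) \<noteq> 0" using K0 n1 by (simp add: add_nonneg_pos)
    show ?thesis unfolding \<epsilon>_def using nz by (simp add: field_simps)
  qed
  also have "\<dots> \<le> c" using c0 sp by (simp add: field_simps)
  finally have "\<sigma> * (real (2*n - 1) * (K * \<epsilon>)) \<le> c" .
  hence "2 * ln 2 - 1 / real n \<le> \<sigma> + c" using main by (simp add: distrib_left)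
  thus False using nc c_def assms by (simp add: field_simps)
qed

end
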